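(* Let $H$ be a Hermitian operator on $\mathcal{H}=(\mathbb{C}^2)^{\otimes n}$ with spectral norm $\|H\|$, let $\lambda$ be such that $\langle \mathbb{1}\rangle(\lambda)>0$, let $M$ be the sample size of the estimators $\hat{\langle H\rangle}(\lambda)$ and $\hat{\langle \mathbb{1}\rangle}(\lambda)$, and let $\kappa>0$. Put $$\eta_H=\sqrt{\frac{\|H\|^2+\sigma_H^2}{\kappa M}},\qquad \eta_{\mathbb{1}}=\sqrt{\frac{1+\sigma_{\mathbb{1}}^2}{\kappa M}},\qquad \hat L''(\lambda)=\frac{\hat{\langle H\rangle}(\lambda)+\eta_H}{\hat{\langle \mathbb{1}\rangle}(\lambda)+\eta_{\mathbb{1}}}.$$ Then with probability at least $1-2\kappa$, $$\min\{\widetilde{\langle H\rangle}(\lambda),0\}\le \hat L''(\lambda)\le \widetilde{\langle H\rangle}(\lambda)+2\,\frac{\eta_H+\|H\|\eta_{\mathbb{1}}}{\langle \mathbb{1}\rangle(\lambda)}.$$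
   Context: Setting (variational quantum-circuit Monte Carlo). Fix $n$ qubits with Hilbert space $\mathcal{H}=(\mathbb{C}^2)^{\otimes n}$. A parameterised circuit gives normalised states $|\phi(\theta)\rangle=U(\theta)|0\rangle^{\otimes n}$, $\theta\in\Theta\subseteq\mathbb{R}^K$, with $U(\theta)$ unitary. A complex-valued guiding function $\alpha(\theta;\lambda)$ depends on parameters $\lambda$; let $C(\lambda)=\int_\Theta|\alpha(\theta;\lambda)|\,d\theta$ (finite and positive), $P(\theta;\lambda)=|\alpha(\theta;\lambda)|/C(\lambda)$, and $e^{i\gamma(\theta;\lambda)}=\alpha(\theta;\lambda)/|\alpha(\theta;\lambda)|$. The variational state is $|\psi(\lambda)\rangle=\int_\Theta P(\theta;\lambda)e^{i\gamma(\theta;\lambda)}|\phi(\theta)\rangle\,d\theta$. For an operator $O$, $\langle O\rangle(\lambda)=\langle\psi(\lambda)|O|\psi(\lambda)\rangle$ and $\widetilde{\langle O\rangle}(\lambda)=\langle O\rangle(\lambda)/\langle \mathbb{1}\rangle(\lambda)$. Estimator: for $\theta,\theta'$ let $X_{\theta,\theta'}=e^{i[\gamma(\theta;\lambda)-\gamma(\theta';\lambda)]}\langle\phi(\theta')|O|\phi(\theta)\rangle$. For each pair a measurement procedure outputs a random variable $\hat X_{\theta,\theta'}$; for Hermitian $O$ (here $O=H$ or $O=\mathbb{1}$) it is real-valued and unbiased for $\mathrm{Re}\,X_{\theta,\theta'}$ (whose average over the symmetric product density equals $\langle O\rangle(\lambda)$), with variance at most $\sigma_O^2$ for all $\theta,\theta'$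 ($\sigma_H^2$ for $O=H$, $\sigma_{\mathbb{1}}^2$ for $O=\mathbb{1}$). The estimator $\hat{\langle O\rangle}$ with sample size $M$ draws $M$ independent pairs $(\theta_l,\theta'_l)$ from the density $P(\theta;\lambda)P(\theta';\lambda)$, obtains independent $\hat X_{\theta_l,\theta'_l}$, and outputs their average. *)

theory Defs
  imports "HOL-Probability.Probability"
begin

text \<open>The Hilbert space (C^2)^{\<otimes> n} is modelled as complex ^ (bool ^ 'q) with
  n = CARD('q): the computational basis is indexed by n-bit strings.\<close>

definition cinner :: "complex ^ 'i \<Rightarrow> complex ^ 'i \<Rightarrow> complex" where
  "cinner u v = (\<Sum>i\<in>UNIV. cnj (u $ i) * v $ i)"

definition adjoint_mat :: "complex ^ 'i ^ 'i \<Rightarrow> complex ^ 'i ^ 'i" where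
  "adjoint_mat A = (\<chi> i j. cnj (A $ j $ i))"

definition hermitian :: "complex ^ 'i ^ 'i \<Rightarrow> bool" where
  "hermitian A \<longleftrightarrow> adjoint_mat A = A"

definition unitary :: "complex ^ 'i ^ 'i \<Rightarrow> bool" where
  "unitary U \<longleftrightarrow> U ** adjoint_mat U = mat 1 \<and> adjoint_mat U ** U = mat 1"

definition spec_norm :: "complex ^ 'i ^ 'i \<Rightarrow> real" where
  "spec_norm A = onorm (\<lambda>v. A *v v)"

definition ket0 :: "complex ^ (bool ^ 'q)" where
  "ket0 = axis (\<chi> _. False) 1"

text \<open>alpha is the guiding function alpha(.;lambda) at the fixed parameter lambda.\<close>

definition normC :: "(real ^ 'k) set \<Rightarrow> (real ^ 'k \<Rightarrow> complex) \<Rightarrow> real" where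
  "normC \<Theta> \<alpha> = (LINT \<theta>:\<Theta>|lborel. norm (\<alpha> \<theta>))"

definition Pdens :: "(real ^ 'k) set \<Rightarrow> (real ^ 'k \<Rightarrow> complex) \<Rightarrow> real ^ 'k \<Rightarrow> real" where
  "Pdens \<Theta> \<alpha> \<theta> = (if \<theta> \<in> \<Theta> then norm (\<alpha> \<theta>) / normC \<Theta> \<alpha> else 0)"

text \<open>e^{i gamma(theta)} = alpha(theta)/|alpha(theta)|.\<close>
definition phase :: "(real ^ 'k \<Rightarrow> complex) \<Rightarrow> real ^ 'k \<Rightarrow> complex" where
  "phase \<alpha> \<theta> = \<alpha> \<theta> / complex_of_real (norm (\<alpha> \<theta>))"

definition circ_state :: "(real ^ 'k \<Rightarrow> complex ^ (bool ^ 'q) ^ (bool ^ 'q)) \<Rightarrow> real ^ 'k \<Rightarrow> complex ^ (bool ^ 'q)" where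
  "circ_state U \<theta> = U \<theta> *v ket0"

definition psi ::
  "(real ^ 'k) set \<Rightarrow> (real ^ 'k \<Rightarrow> complex) \<Rightarrow> (real ^ 'k \<Rightarrow> complex ^ (bool ^ 'q) ^ (bool ^ 'q))
     \<Rightarrow> complex ^ (bool ^ 'q)" where
  "psi \<Theta> \<alpha> U = (LINT \<theta>:\<Theta>|lborel.
      (complex_of_real (Pdens \<Theta> \<alpha> \<theta>) * phase \<alpha> \<theta>) *s circ_state U \<theta>)"

text \<open>The unnormalised expectation value <Op>(lambda) = <psi|Op|psi>.\<close>
definition expval ::
  "(real ^ 'k) set \<Rightarrow> (real ^ 'k \<Rightarrow> complex) \<Rightarrow> (real ^ 'k \<Rightarrow> complex ^ (bool ^ 'q) ^ (bool ^ 'q))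
     \<Rightarrow> complex ^ (bool ^ 'q) ^ (bool ^ 'q) \<Rightarrow> complex" where
  "expval \<Theta> \<alpha> U Op = cinner (psi \<Theta> \<alpha> U) (Op *v psi \<Theta> \<alpha> U)"

definition Xpair ::
  "(real ^ 'k \<Rightarrow> complex) \<Rightarrow> (real ^ 'k \<Rightarrow> complex ^ (bool ^ 'q) ^ (bool ^ 'q))
     \<Rightarrow> complex ^ (bool ^ 'q) ^ (bool ^ 'q) \<Rightarrow> (real ^ 'k) \<times> (real ^ 'k) \<Rightarrow> complex" where
  "Xpair \<alpha> U Op p = phase \<alpha> (fst p) * cnj (phase \<alpha> (snd p))
       * cinner (circ_state U (snd p)) (Op *v circ_state U (fst p))"

definition pair_dist :: "(real ^ 'k) set \<Rightarrow> (real ^ 'k \<Rightarrow> complex) \<Rightarrow> ((real ^ 'k) \<times> (real ^ 'k)) measure" where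
  "pair_dist \<Theta> \<alpha> = density (lborel \<Otimes>\<^sub>M lborel)
      (\<lambda>p. ennreal (Pdens \<Theta> \<alpha> (fst p) * Pdens \<Theta> \<alpha> (snd p)))"

text \<open>Q p is the law of the measurement outcome hat X_{theta,theta'} for p = (theta,theta').\<close>
definition estimator_dist ::
  "(real ^ 'k) set \<Rightarrow> (real ^ 'k \<Rightarrow> complex) \<Rightarrow> ((real ^ 'k) \<times> (real ^ 'k) \<Rightarrow> real measure) \<Rightarrow> nat \<Rightarrow> real measure" where
  "estimator_dist \<Theta> \<alpha> Q M =
     distr (PiM {..<M} (\<lambda>_. pair_dist \<Theta> \<alpha> \<bind> Q)) borel (\<lambda>\<omega>. (\<Sum>l<M. \<omega> l) / real M)"

definition valid_measurement ::
  "(real ^ 'k) set \<Rightarrow> (real ^ 'k \<Rightarrow> complex) \<Rightarrow> (real ^ 'k \<Rightarrow> complex ^ (bool ^ 'q) ^ (bool ^ 'q))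
     \<Rightarrow> complex ^ (bool ^ 'q) ^ (bool ^ 'q) \<Rightarrow> real \<Rightarrow> ((real ^ 'k) \<times> (real ^ 'k) \<Rightarrow> real measure) \<Rightarrow> bool" where
  "valid_measurement \<Theta> \<alpha> U Op \<sigma> Q \<longleftrightarrow>
     Q \<in> measurable (lborel \<Otimes>\<^sub>M lborel) (prob_algebra borel) \<and>
     (\<forall>p \<in> \<Theta> \<times> \<Theta>.
        integrable (Q p) (\<lambda>x. x ^ 2) \<and>
        (\<integral>x. x \<partial>Q p) = Re (Xpair \<alpha> U Op p) \<and>
        (\<integral>x. (x - Re (Xpair \<alpha> U Op p)) ^ 2 \<partial>Q p) \<le> \<sigma> ^ 2)"

end

theory Submission
  imports Defs
begin


lemma vec_nth_meas[measurable (raw)]: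
  fixes f :: "'a \<Rightarrow> 'b::real_normed_vector ^ 'n"
  assumes "f \<in> borel_measurable M"
  shows "(\<lambda>x. f x $ i) \<in> borel_measurable M"
  using measurable_compose[OF assms borel_measurable_continuous_onI[OF continuous_on_component[OF continuous_on_id]]] by simp

lemma vec_meas_comp:
  fixes f :: "'a \<Rightarrow> 'b::euclidean_space ^ 'n"
  assumes "\<And>i. (\<lambda>x. f x $ i) \<in> borel_measurable M"
  shows "f \<in> borel_measurable M"
proof (subst borel_measurable_euclidean_space, intro ballI)
  fix b :: "'b^'n" assume "b \<in> Basis"
  then obtain i u where b: "b = axis i u" "u \<in> Basis" by (auto simp: Basis_vec_def)
  have "(\<lambda>x. f x $ i \<bullet> u) \<in> borel_measurable M" using assms[of i] by measurable
  then show "(\<lambda>x. f x \<bullet> b) \<in> borel_measurable M" by (simp add: b inner_axis)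
qed

lemma cinner_cnj: "cnj (cinner u v) = cinner v u"
  by (simp add: cinner_def mult.commute)

lemma norm_vec_sq: "(norm (v::complex^'i))^2 = (\<Sum>i\<in>UNIV. (norm (v$i))^2)"
  by (simp add: norm_vec_def L2_set_def sum_nonneg)

lemma cnj_mult_self: "cnj z * z = (complex_of_real (cmod z))^2"
  by (metis complex_norm_square mult.commute of_real_power)

lemma cinner_self: "cinner v v = complex_of_real ((norm v)^2)"
  unfolding norm_vec_sq cinner_def of_real_sum by (simp add: cnj_mult_self)

lemma cinner_CS: "norm (cinner u v) \<le> norm u * norm v"
proof -
  have "norm (cinner u v) \<le> (\<Sum>i\<in>UNIV. norm (cnj (u$i) * v$i))"
    unfolding cinner_def by (rule norm_sum)
  also have "\<dots> = (\<Sum>i\<in>UNIV. \<bar>norm (u$i)\<bar> * \<bar>norm (v$i)\<bar>)" by (simp add: norm_mult)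
  also have "\<dots> \<le> L2_set (\<lambda>i. norm (u$i)) UNIV * L2_set (\<lambda>i. norm (v$i)) UNIV"
    by (rule L2_set_mult_ineq)
  finally show ?thesis by (simp add: norm_vec_def)
qed

lemma cinner_adj: "cinner (A *v u) w = cinner u (adjoint_mat A *v w)"
  by (simp add: cinner_def adjoint_mat_def matrix_vector_mult_def sum_distrib_left sum_distrib_right
      mult_ac) (rule sum.swap)

lemma cinner_mat1: "cinner u (mat 1 *v w) = cinner u w"
  by simp

lemma unitary_norm:
  assumes "unitary U" shows "norm (U *v v) = norm v"
proof -
  have "cinner (U *v v) (U *v v) = cinner v v"
    using assms by (simp add: cinner_adj matrix_vector_mul_assoc unitary_def)
  then have "complex_of_real ((norm (U *v v))^2) = complex_of_real ((norm v)^2)"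
    by (simp only: cinner_self)
  then have "(norm (U *v v))^2 = (norm v)^2" using of_real_eq_iff by blast
  then show ?thesis by (simp add: power2_eq_iff_nonneg)
qed

lemma herm_real:
  assumes "hermitian H" shows "cnj (cinner v (H *v v)) = cinner v (H *v v)"
  using assms by (simp add: cinner_cnj cinner_adj hermitian_def)

lemma spec_norm_bound: "norm (A *v v) \<le> spec_norm A * norm (v::complex^'i)"
  unfolding spec_norm_def by (rule onorm) simp

lemma spec_norm_nonneg: "0 \<le> spec_norm (A::complex^'i^'i)"
  unfolding spec_norm_def by (rule onorm_pos_le) simp

lemma cinner_scale: "cinner (a *s u) (A *v (b *s w)) = cnj a * b * cinner u (A *v w)"
  by (simp add: cinner_def matrix_vector_mult_def sum_distrib_left mult_ac)



lemma bind_sets_borel: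
  assumes PD: "prob_space PD" and Q: "Q \<in> PD \<rightarrow>\<^sub>M subprob_algebra (borel :: real measure)"
  shows "sets (PD \<bind> Q) = sets borel"
proof -
  have "space PD \<noteq> {}" using prob_space.not_empty[OF PD] .
  then show ?thesis using subprob_measurableD(2)[OF Q] by (simp add: sets_bind)
qed

lemma bind_integral_nonneg:
  fixes h :: "real \<Rightarrow> real"
  assumes PD: "prob_space PD" and Q: "Q \<in> PD \<rightarrow>\<^sub>M subprob_algebra borel"
    and h[measurable]: "h \<in> borel_measurable borel" and nn: "\<And>x. 0 \<le> h x"
    and ih: "AE p in PD. integrable (Q p) h"
    and iint: "integrable PD (\<lambda>p. \<integral>x. h x \<partial>Q p)"
  shows "integrable (PD \<bind> Q) h" "integral\<^sup>L (PD \<bind> Q) h = (\<integral>p. (\<integral>x. h x \<partial>Q p) \<partial>PD)"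
proof -
  have sets: "sets (PD \<bind> Q) = sets borel" by (rule bind_sets_borel[OF PD Q])
  have hm: "h \<in> borel_measurable (PD \<bind> Q)" using measurable_cong_sets[OF sets refl] h by blast
  have "(\<integral>\<^sup>+x. ennreal (h x) \<partial>(PD \<bind> Q)) = (\<integral>\<^sup>+p. (\<integral>\<^sup>+x. ennreal (h x) \<partial>Q p) \<partial>PD)"
    by (rule nn_integral_bind[OF _ Q]) measurable
  also have "\<dots> = (\<integral>\<^sup>+p. ennreal (\<integral>x. h x \<partial>Q p) \<partial>PD)"
  proof (rule nn_integral_cong_AE)
    show "AE p in PD. (\<integral>\<^sup>+x. ennreal (h x) \<partial>Q p) = ennreal (\<integral>x. h x \<partial>Q p)"
      using ih by eventually_elim (rule nn_integral_eq_integral, auto simp: nn)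
  qed
  also have "\<dots> = ennreal (\<integral>p. (\<integral>x. h x \<partial>Q p) \<partial>PD)"
    by (rule nn_integral_eq_integral[OF iint]) (simp add: integral_nonneg nn)
  finally have eq: "(\<integral>\<^sup>+x. ennreal (h x) \<partial>(PD \<bind> Q)) = ennreal (\<integral>p. (\<integral>x. h x \<partial>Q p) \<partial>PD)" .
  show "integrable (PD \<bind> Q) h"
    by (rule integrableI_nonneg[OF hm]) (simp_all add: nn eq)
  show "integral\<^sup>L (PD \<bind> Q) h = (\<integral>p. (\<integral>x. h x \<partial>Q p) \<partial>PD)"
    by (subst integral_eq_nn_integral[OF hm]) (simp_all add: nn eq integral_nonneg)
qed

lemma bind_integral:
  fixes f :: "real \<Rightarrow> real"
  assumes PD: "prob_space PD" and Q: "Q \<in> PD \<rightarrow>\<^sub>M subprob_algebra borel"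
    and f[measurable]: "f \<in> borel_measurable borel"
    and ih: "AE p in PD. integrable (Q p) f"
    and iint: "integrable PD (\<lambda>p. \<integral>x. \<bar>f x\<bar> \<partial>Q p)"
  shows "integrable (PD \<bind> Q) f" "integral\<^sup>L (PD \<bind> Q) f = (\<integral>p. (\<integral>x. f x \<partial>Q p) \<partial>PD)"
proof -
  define fp where "fp = (\<lambda>x. max (f x) 0)"
  define fn where "fn = (\<lambda>x. max (- f x) 0)"
  have fpm[measurable]: "fp \<in> borel_measurable borel" unfolding fp_def by measurable
  have fnm[measurable]: "fn \<in> borel_measurable borel" unfolding fn_def by measurable
  have feq: "f = (\<lambda>x. fp x - fn x)" by (auto simp: fp_def fn_def max_def)
  have ihp: "AE p in PD. integrable (Q p) fp" using ih
    by eventually_elim (auto simp: fp_def intro!: integrable_max)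
  have ihn: "AE p in PD. integrable (Q p) fn" using ih
    by eventually_elim (auto simp: fn_def intro!: integrable_max)
  have mint: "(\<lambda>p. \<integral>x. g x \<partial>Q p) \<in> borel_measurable PD" if [measurable]: "g \<in> borel_measurable borel" for g :: "real \<Rightarrow> real"
    by (rule measurable_compose[OF Q integral_measurable_subprob_algebra]) simp
  have iintp: "integrable PD (\<lambda>p. \<integral>x. fp x \<partial>Q p)"
  proof (rule Bochner_Integration.integrable_bound[OF iint])
    show "(\<lambda>p. \<integral>x. fp x \<partial>Q p) \<in> borel_measurable PD" by (rule mint) simp
    show "AE p in PD. norm (\<integral>x. fp x \<partial>Q p) \<le> norm (\<integral>x. \<bar>f x\<bar> \<partial>Q p)"
      using ih ihp by eventually_elim
        (auto simp: fp_def integral_nonneg intro!: integral_mono)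
  qed
  have iintn: "integrable PD (\<lambda>p. \<integral>x. fn x \<partial>Q p)"
  proof (rule Bochner_Integration.integrable_bound[OF iint])
    show "(\<lambda>p. \<integral>x. fn x \<partial>Q p) \<in> borel_measurable PD" by (rule mint) simp
    show "AE p in PD. norm (\<integral>x. fn x \<partial>Q p) \<le> norm (\<integral>x. \<bar>f x\<bar> \<partial>Q p)"
      using ih ihn by eventually_elim
        (auto simp: fn_def integral_nonneg intro!: integral_mono)
  qed
  note P = bind_integral_nonneg[OF PD Q fpm _ ihp iintp] 
  note N = bind_integral_nonneg[OF PD Q fnm _ ihn iintn]
  have nnp: "\<And>x. 0 \<le> fp x" "\<And>x. 0 \<le> fn x" by (auto simp: fp_def fn_def)
  show "integrable (PD \<bind> Q) f"
    by (subst feq) (intro Bochner_Integration.integrable_diff P(1) N(1) nnp)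
  have "integral\<^sup>L (PD \<bind> Q) f = integral\<^sup>L (PD \<bind> Q) fp - integral\<^sup>L (PD \<bind> Q) fn"
    by (subst feq) (intro Bochner_Integration.integral_diff P(1) N(1) nnp)
  also have "\<dots> = (\<integral>p. (\<integral>x. fp x \<partial>Q p) \<partial>PD) - (\<integral>p. (\<integral>x. fn x \<partial>Q p) \<partial>PD)"
    using P(2) N(2) nnp by simp
  also have "\<dots> = (\<integral>p. (\<integral>x. fp x \<partial>Q p) - (\<integral>x. fn x \<partial>Q p) \<partial>PD)"
    by (rule Bochner_Integration.integral_diff[symmetric, OF iintp iintn])
  also have "\<dots> = (\<integral>p. (\<integral>x. f x \<partial>Q p) \<partial>PD)"
  proof (rule integral_cong_AE)
    show "(\<lambda>p. (\<integral>x. fp x \<partial>Q p) - (\<integral>x. fn x \<partial>Q p)) \<in> borel_measurable PD"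
      using mint[OF fpm] mint[OF fnm] by measurable
    show "(\<lambda>p. \<integral>x. f x \<partial>Q p) \<in> borel_measurable PD" by (rule mint) simp
    show "AE p in PD. (\<integral>x. fp x \<partial>Q p) - (\<integral>x. fn x \<partial>Q p) = (\<integral>x. f x \<partial>Q p)"
    proof (rule AE_mp[OF AE_conj_iff[THEN iffD2, OF conjI[OF ihp ihn]]], intro AE_I2 impI)
      fix p assume "integrable (Q p) fp \<and> integrable (Q p) fn"
      then have "(\<integral>x. fp x - fn x \<partial>Q p) = (\<integral>x. fp x \<partial>Q p) - (\<integral>x. fn x \<partial>Q p)"
        by (intro Bochner_Integration.integral_diff) auto
      then show "(\<integral>x. fp x \<partial>Q p) - (\<integral>x. fn x \<partial>Q p) = (\<integral>x. f x \<partial>Q p)"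
        by (simp add: feq[symmetric])
    qed
  qed
  finally show "integral\<^sup>L (PD \<bind> Q) f = (\<integral>p. (\<integral>x. f x \<partial>Q p) \<partial>PD)" .
qed


lemma sample_law:
  fixes PD :: "'p measure" and K :: "'p measure" and Q :: "'p \<Rightarrow> real measure" and g :: "'p \<Rightarrow> real"
  assumes PD: "prob_space PD" and sPD: "sets PD = sets K"
    and Q: "Q \<in> K \<rightarrow>\<^sub>M prob_algebra borel"
    and AEA: "AE p in PD. p \<in> A"
    and QA: "\<And>p. p \<in> A \<Longrightarrow> integrable (Q p) (\<lambda>x. x^2) \<and> (\<integral>x. x \<partial>Q p) = g p \<and> (\<integral>x. (x - g p)^2 \<partial>Q p) \<le> \<sigma>^2"
    and gB: "\<And>p. p \<in> A \<Longrightarrow> \<bar>g p\<bar> \<le> B"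
    and gm: "g \<in> borel_measurable PD"
    and m: "m = (\<integral>p. g p \<partial>PD)"
  shows "prob_space (PD \<bind> Q)" "sets (PD \<bind> Q) = sets borel"
    "integrable (PD \<bind> Q) (\<lambda>x. x^2)" "integrable (PD \<bind> Q) (\<lambda>x. x)"
    "(\<integral>x. x \<partial>(PD \<bind> Q)) = m" "(\<integral>x. (x - m)^2 \<partial>(PD \<bind> Q)) \<le> \<sigma>^2 + B^2"
proof -
  interpret P: prob_space PD by (rule PD)
  have Q': "Q \<in> PD \<rightarrow>\<^sub>M prob_algebra borel" using measurable_cong_sets[OF sPD refl] Q by blast
  have Qs: "Q \<in> PD \<rightarrow>\<^sub>M subprob_algebra borel" by (rule measurable_prob_algebraD[OF Q'])
  show S: "prob_space (PD \<bind> Q)"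
    by (rule prob_space_bind'[OF _ Q']) (simp add: space_prob_algebra PD)
  show sS: "sets (PD \<bind> Q) = sets borel" by (rule bind_sets_borel[OF PD Qs])
  interpret S: prob_space "PD \<bind> Q" by (rule S)
  have Qp: "prob_space (Q p) \<and> sets (Q p) = sets borel" if "p \<in> space PD" for p
    using measurable_space[OF Q' that] by (simp add: space_prob_algebra)
  have key: "integrable (Q p) (\<lambda>x. x^2) \<and> integrable (Q p) (\<lambda>x. x) \<and> (\<integral>x. x \<partial>Q p) = g p
     \<and> (\<integral>x. x^2 \<partial>Q p) \<le> \<sigma>^2 + B^2 \<and> (\<integral>x. \<bar>x\<bar> \<partial>Q p) \<le> 1 + (\<sigma>^2 + B^2)"
    if p: "p \<in> space PD" "p \<in> A" for p
  proof -
    interpret Qp: prob_space "Q p" using Qp[OF p(1)] by simp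
    have sQ: "sets (Q p) = sets borel" using Qp[OF p(1)] by simp
    have mx: "(\<lambda>x. x) \<in> borel_measurable (Q p)" by (subst measurable_cong_sets[OF sQ refl]) simp
    have i2: "integrable (Q p) (\<lambda>x. x^2)" and e1: "(\<integral>x. x \<partial>Q p) = g p"
      and v: "(\<integral>x. (x - g p)^2 \<partial>Q p) \<le> \<sigma>^2" using QA[OF p(2)] by auto
    have i1: "integrable (Q p) (\<lambda>x. x)" by (rule Qp.square_integrable_imp_integrable[OF mx i2])
    have "(\<integral>x. (x - g p)^2 \<partial>Q p) = (\<integral>x. x^2 - 2 * g p * x + (g p)^2 \<partial>Q p)"
      by (simp add: power2_diff algebra_simps)
    also have "\<dots> = (\<integral>x. x^2 \<partial>Q p) - 2 * g p * (\<integral>x. x \<partial>Q p) + (g p)^2"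
      using i1 i2 by (simp add: Qp.prob_space)
    finally have "(\<integral>x. x^2 \<partial>Q p) = (\<integral>x. (x - g p)^2 \<partial>Q p) + (g p)^2"
      using e1 by (simp add: power2_eq_square)
    also have "\<dots> \<le> \<sigma>^2 + B^2"
    proof (rule add_mono[OF v])
      have "\<bar>g p\<bar>^2 \<le> B^2" using gB[OF p(2)] by (intro power_mono) auto
      then show "(g p)^2 \<le> B^2" by simp
    qed
    finally have b2: "(\<integral>x. x^2 \<partial>Q p) \<le> \<sigma>^2 + B^2" .
    have "(\<integral>x. \<bar>x\<bar> \<partial>Q p) \<le> (\<integral>x. 1 + x^2 \<partial>Q p)"
    proof (rule integral_mono)
      show "integrable (Q p) (\<lambda>x. \<bar>x\<bar>)" using i1 by simp
      show "integrable (Q p) (\<lambda>x. 1 + x^2)" using i2 by simp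
      fix x :: real show "\<bar>x\<bar> \<le> 1 + x^2"
      proof (cases "\<bar>x\<bar> \<le> 1")
        case True then show ?thesis by (simp add: add_increasing2)
      next
        case False
        then have "\<bar>x\<bar> * 1 \<le> \<bar>x\<bar> * \<bar>x\<bar>" by (intro mult_left_mono) auto
        then show ?thesis by (simp add: power2_eq_square)
      qed
    qed
    also have "\<dots> = 1 + (\<integral>x. x^2 \<partial>Q p)" using i2 by (simp add: Qp.prob_space)
    finally show ?thesis using i1 i2 e1 b2 by simp
  qed
  have AEk: "AE p in PD. integrable (Q p) (\<lambda>x. x^2) \<and> integrable (Q p) (\<lambda>x. x) \<and> (\<integral>x. x \<partial>Q p) = g p
     \<and> (\<integral>x. x^2 \<partial>Q p) \<le> \<sigma>^2 + B^2 \<and> (\<integral>x. \<bar>x\<bar> \<partial>Q p) \<le> 1 + (\<sigma>^2 + B^2)"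
    using AEA AE_space by eventually_elim (rule key)
  have mint: "(\<lambda>p. \<integral>x. h x \<partial>Q p) \<in> borel_measurable PD" if [measurable]: "h \<in> borel_measurable borel" for h :: "real \<Rightarrow> real"
    by (rule measurable_compose[OF Qs integral_measurable_subprob_algebra]) simp
  have ia: "integrable PD (\<lambda>p. \<integral>x. \<bar>x\<bar> \<partial>Q p)"
  proof (rule P.integrable_const_bound[where B="1 + (\<sigma>^2 + B^2)"])
    show "AE p in PD. norm (\<integral>x. \<bar>x\<bar> \<partial>Q p) \<le> 1 + (\<sigma>^2 + B^2)"
      using AEk by (rule AE_mp) (intro AE_I2 impI, simp add: integral_nonneg)
    show "(\<lambda>p. \<integral>x. \<bar>x\<bar> \<partial>Q p) \<in> borel_measurable PD" by (rule mint) simp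
  qed
  have ia2: "integrable PD (\<lambda>p. \<integral>x. \<bar>x^2\<bar> \<partial>Q p)"
  proof (rule P.integrable_const_bound[where B="\<sigma>^2 + B^2"])
    show "AE p in PD. norm (\<integral>x. \<bar>x^2\<bar> \<partial>Q p) \<le> \<sigma>^2 + B^2"
      using AEk by (rule AE_mp) (intro AE_I2 impI, simp add: integral_nonneg)
    show "(\<lambda>p. \<integral>x. \<bar>x^2\<bar> \<partial>Q p) \<in> borel_measurable PD" by (rule mint) simp
  qed
  have ih1: "AE p in PD. integrable (Q p) (\<lambda>x. x)"
    by (rule AE_mp[OF AEk]) (rule AE_I2, blast)
  have ih2: "AE p in PD. integrable (Q p) (\<lambda>x. x^2)"
    by (rule AE_mp[OF AEk]) (rule AE_I2, blast)
  have B1a: "integrable (PD \<bind> Q) (\<lambda>x. x)"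
    by (rule bind_integral(1)[OF PD Qs _ ih1 ia]) simp
  have B1b: "integral\<^sup>L (PD \<bind> Q) (\<lambda>x. x) = (\<integral>p. (\<integral>x. x \<partial>Q p) \<partial>PD)"
    by (rule bind_integral(2)[OF PD Qs _ ih1 ia]) simp
  have B2a: "integrable (PD \<bind> Q) (\<lambda>x. x^2)"
    by (rule bind_integral(1)[OF PD Qs _ ih2 ia2]) simp
  have B2b: "integral\<^sup>L (PD \<bind> Q) (\<lambda>x. x^2) = (\<integral>p. (\<integral>x. x^2 \<partial>Q p) \<partial>PD)"
    by (rule bind_integral(2)[OF PD Qs _ ih2 ia2]) simp
  show i1: "integrable (PD \<bind> Q) (\<lambda>x. x)" using B1a by simp
  show i2: "integrable (PD \<bind> Q) (\<lambda>x. x^2)" using B2a by simp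
  have "(\<integral>x. x \<partial>(PD \<bind> Q)) = (\<integral>p. (\<integral>x. x \<partial>Q p) \<partial>PD)" using B1b by simp
  also have "\<dots> = (\<integral>p. g p \<partial>PD)"
    by (rule integral_cong_AE) (use AEk gm in \<open>auto elim: AE_mp intro: mint\<close>)
  finally show e1: "(\<integral>x. x \<partial>(PD \<bind> Q)) = m" using m by simp
  have "(\<integral>x. x^2 \<partial>(PD \<bind> Q)) = (\<integral>p. (\<integral>x. x^2 \<partial>Q p) \<partial>PD)" using B2b by simp
  also have "\<dots> \<le> (\<integral>p. \<sigma>^2 + B^2 \<partial>PD)"
  proof (rule integral_mono_AE)
    show "integrable PD (\<lambda>p. \<integral>x. x^2 \<partial>Q p)" using ia2 by simp
  qed (use AEk in \<open>auto elim: AE_mp\<close>)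
  also have "\<dots> = \<sigma>^2 + B^2" by (simp add: P.prob_space)
  finally have b2: "(\<integral>x. x^2 \<partial>(PD \<bind> Q)) \<le> \<sigma>^2 + B^2" .
  have "(\<integral>x. (x - m)^2 \<partial>(PD \<bind> Q)) = (\<integral>x. x^2 - 2 * m * x + m^2 \<partial>(PD \<bind> Q))"
    by (simp add: power2_diff algebra_simps)
  also have "\<dots> = (\<integral>x. x^2 \<partial>(PD \<bind> Q)) - 2 * m * (\<integral>x. x \<partial>(PD \<bind> Q)) + m^2"
    using i1 i2 by (simp add: S.prob_space)
  also have "\<dots> = (\<integral>x. x^2 \<partial>(PD \<bind> Q)) - m^2" using e1 by (simp add: power2_eq_square)
  also have "\<dots> \<le> \<sigma>^2 + B^2" using b2 by (smt (verit) zero_le_power2)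
  finally show "(\<integral>x. (x - m)^2 \<partial>(PD \<bind> Q)) \<le> \<sigma>^2 + B^2" .
qed



lemma avg_moment:
  fixes S :: "real measure" and M :: nat
  assumes S: "prob_space S" and sS: "sets S = sets borel"
    and i2: "integrable S (\<lambda>x. x^2)" and i1: "integrable S (\<lambda>x. x)"
    and e1: "(\<integral>x. x \<partial>S) = m" and v: "(\<integral>x. (x - m)^2 \<partial>S) \<le> V" and Mpos: "M > 0"
  shows "prob_space (PiM {..<M} (\<lambda>_. S))"
    "(\<lambda>\<omega>. (\<Sum>l<M. \<omega> l) / real M) \<in> borel_measurable (PiM {..<M} (\<lambda>_. S))"
    "integrable (PiM {..<M} (\<lambda>_. S)) (\<lambda>\<omega>. ((\<Sum>l<M. \<omega> l) / real M - m)^2)"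
    "(\<integral>\<omega>. ((\<Sum>l<M. \<omega> l) / real M - m)^2 \<partial>PiM {..<M} (\<lambda>_. S)) \<le> V / real M"
proof -
  interpret S: prob_space S by (rule S)
  interpret P: product_prob_space "\<lambda>_. S" "{..<M}" by (rule product_prob_spaceI) (rule S)
  interpret F: finite_product_prob_space "\<lambda>_. S" "{..<M}" by unfold_locales simp
  show "prob_space (PiM {..<M} (\<lambda>_. S))" by (rule prob_space_PiM) (rule S)
  let ?P = "PiM {..<M} (\<lambda>_. S)"
  have mcomp[measurable]: "(\<lambda>\<omega>. \<omega> l) \<in> borel_measurable ?P" if "l < M" for l
  proof -
    have "(\<lambda>\<omega>. \<omega> l) \<in> ?P \<rightarrow>\<^sub>M S" using that by (intro measurable_component_singleton) auto
    then show ?thesis using measurable_cong_sets[OF refl sS] by blast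
  qed
  show "(\<lambda>\<omega>. (\<Sum>l<M. \<omega> l) / real M) \<in> borel_measurable ?P"
    by (intro borel_measurable_divide borel_measurable_sum borel_measurable_const) (auto intro: mcomp)
  have ic: "integrable S (\<lambda>x. x - m)" using i1 by simp
  have ic2: "integrable S (\<lambda>x. (x - m)^2)" using i1 i2 by (simp add: power2_diff)
  have ec: "(\<integral>x. x - m \<partial>S) = 0" using i1 e1 by (simp add: S.prob_space)
  define f where "f l l' i x = (if i = l then x - m else 1) * (if i = l' then x - m else (1::real))" for l l' i :: nat and x
  have fi: "integrable S (f l l' i)" for l l' i
    unfolding f_def using ic ic2 by (cases "i = l"; cases "i = l'") (simp_all add: power2_eq_square)
  have fprod: "(\<Prod>i<M. f l l' i (\<omega> i)) = (\<omega> l - m) * (\<omega> l' - m)" if "l < M" "l' < M" for l l' \<omega>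
    using that by (simp add: f_def prod.distrib)
  have int_pair: "integrable ?P (\<lambda>\<omega>. (\<omega> l - m) * (\<omega> l' - m))
      \<and> (\<integral>\<omega>. (\<omega> l - m) * (\<omega> l' - m) \<partial>?P) = (if l = l' then (\<integral>x. (x - m)^2 \<partial>S) else 0)"
    if l: "l < M" "l' < M" for l l'
  proof -
    have "integrable ?P (\<lambda>\<omega>. \<Prod>i<M. f l l' i (\<omega> i))"
      by (rule P.product_integrable_prod) (auto intro: fi)
    moreover have "(\<integral>\<omega>. (\<Prod>i<M. f l l' i (\<omega> i)) \<partial>?P) = (\<Prod>i<M. integral\<^sup>L S (f l l' i))"
      by (rule P.product_integral_prod) (auto intro: fi)
    moreover have "(\<Prod>i<M. integral\<^sup>L S (f l l' i)) = (if l = l' then (\<integral>x. (x - m)^2 \<partial>S) else 0)"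
    proof (cases "l = l'")
      case True
      have "(\<Prod>i<M. integral\<^sup>L S (f l l' i)) = (\<Prod>i<M. if i = l then (\<integral>x. (x - m)^2 \<partial>S) else 1)"
        by (rule prod.cong) (auto simp: f_def[abs_def] True power2_eq_square S.prob_space)
      then show ?thesis using True l by simp
    next
      case False
      have "integral\<^sup>L S (f l l' l) = 0" using False ec by (simp add: f_def[abs_def])
      then show ?thesis using False l by (auto intro: prod_zero)
    qed
    ultimately show ?thesis using fprod[OF l] by simp
  qed
  have avg_eq: "((\<Sum>l<M. \<omega> l) / real M - m)^2 = (\<Sum>l<M. \<Sum>l'<M. (\<omega> l - m) * (\<omega> l' - m)) / (real M)^2" for \<omega>
  proof -
    have "(\<Sum>l<M. \<omega> l) / real M - m = (\<Sum>l<M. \<omega> l - m) / real M"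
      using Mpos by (simp add: sum_subtractf field_simps)
    then show ?thesis
      by (simp add: power2_eq_square power_divide sum_product)
  qed
  have isum: "integrable ?P (\<lambda>\<omega>. \<Sum>l<M. \<Sum>l'<M. (\<omega> l - m) * (\<omega> l' - m))"
    using int_pair by (intro Bochner_Integration.integrable_sum) auto
  show "integrable ?P (\<lambda>\<omega>. ((\<Sum>l<M. \<omega> l) / real M - m)^2)"
    unfolding avg_eq using isum by simp
  have "(\<integral>\<omega>. ((\<Sum>l<M. \<omega> l) / real M - m)^2 \<partial>?P)
      = (\<integral>\<omega>. (\<Sum>l<M. \<Sum>l'<M. (\<omega> l - m) * (\<omega> l' - m)) \<partial>?P) / (real M)^2"
    unfolding avg_eq by simp
  also have "(\<integral>\<omega>. (\<Sum>l<M. \<Sum>l'<M. (\<omega> l - m) * (\<omega> l' - m)) \<partial>?P)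
      = (\<Sum>l<M. (\<integral>\<omega>. (\<Sum>l'<M. (\<omega> l - m) * (\<omega> l' - m)) \<partial>?P))"
    by (rule Bochner_Integration.integral_sum) (use int_pair in \<open>auto intro!: Bochner_Integration.integrable_sum\<close>)
  also have "\<dots> = (\<Sum>l<M. \<Sum>l'<M. (\<integral>\<omega>. (\<omega> l - m) * (\<omega> l' - m) \<partial>?P))"
    by (intro sum.cong refl Bochner_Integration.integral_sum) (use int_pair in auto)
  also have "\<dots> = (\<Sum>l<M. \<Sum>l'<M. (if l = l' then (\<integral>x. (x - m)^2 \<partial>S) else 0))"
    using int_pair by simp
  also have "\<dots> = real M * (\<integral>x. (x - m)^2 \<partial>S)" by simp
  finally have "(\<integral>\<omega>. ((\<Sum>l<M. \<omega> l) / real M - m)^2 \<partial>?P) = (\<integral>x. (x - m)^2 \<partial>S) / real M"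
    using Mpos by (simp add: power2_eq_square)
  also have "\<dots> \<le> V / real M" using v Mpos by (simp add: divide_right_mono)
  finally show "(\<integral>\<omega>. ((\<Sum>l<M. \<omega> l) / real M - m)^2 \<partial>?P) \<le> V / real M" .
qed


lemma tail_bound:
  fixes Y :: "'a \<Rightarrow> real"
  assumes P: "prob_space P" and Ym[measurable]: "Y \<in> borel_measurable P"
    and iY: "integrable P (\<lambda>\<omega>. (Y \<omega> - m)^2)" and W: "(\<integral>\<omega>. (Y \<omega> - m)^2 \<partial>P) \<le> W"
    and eta: "0 \<le> \<eta>" and kW: "W \<le> \<kappa> * \<eta>^2" and kap: "0 \<le> \<kappa>"
  shows "measure P {\<omega> \<in> space P. \<eta> < \<bar>Y \<omega> - m\<bar>} \<le> \<kappa>"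
proof (cases "\<eta> > 0")
  case True
  interpret prob_space P by (rule P)
  have "measure P {\<omega>\<in>space P. \<eta> < \<bar>Y \<omega> - m\<bar>} \<le> measure P {\<omega>\<in>space P. \<bar>Y \<omega> - m\<bar> \<ge> \<eta>}"
    by (rule finite_measure_mono) auto
  also have "\<dots> \<le> (\<integral>\<omega>. (Y \<omega> - m)^2 \<partial>P) / \<eta>^2"
    by (rule second_moment_method[of "\<lambda>\<omega>. Y \<omega> - m", OF _ iY True]) simp
  also have "\<dots> \<le> W / \<eta>^2" using W by (simp add: divide_right_mono)
  also have "\<dots> \<le> \<kappa>" using kW True by (simp add: pos_divide_le_eq)
  finally show ?thesis .
next
  case False
  interpret prob_space P by (rule P)
  have e0: "\<eta> = 0" using False eta by simp
  have "(\<integral>\<omega>. (Y \<omega> - m)^2 \<partial>P) = 0"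
  proof -
    have n: "0 \<le> (\<integral>\<omega>. (Y \<omega> - m)^2 \<partial>P)" by (rule Bochner_Integration.integral_nonneg) simp
    have "W \<le> 0" using kW e0 by simp
    then show ?thesis using W n by linarith
  qed
  then have "AE \<omega> in P. (Y \<omega> - m)^2 = 0"
    using integral_nonneg_eq_0_iff_AE[OF iY] by simp
  then have "AE \<omega> in P. \<not> (\<eta> < \<bar>Y \<omega> - m\<bar>)" using e0 by (auto elim: AE_mp)
  then have "emeasure P {\<omega> \<in> space P. \<eta> < \<bar>Y \<omega> - m\<bar>} = 0"
    by (subst (asm) AE_iff_measurable[OF _ refl]) auto
  then show ?thesis using kap by (simp add: measure_def)
qed



lemma alg:
  fixes I h nH eH e1 a b :: real
  assumes I: "I > 0" and hb: "\<bar>h\<bar> \<le> nH * I" and nH: "nH \<ge> 0" and eH: "eH \<ge> 0" and e1: "e1 \<ge> 0"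
    and ha: "\<bar>a - h\<bar> \<le> eH" and hb1: "\<bar>b - I\<bar> \<le> e1"
  shows "min (h / I) 0 \<le> (a + eH) / (b + e1) \<and> (a + eH) / (b + e1) \<le> h / I + 2 * (eH + nH * e1) / I"
proof -
  define N where "N = a + eH"
  define D where "D = b + e1"
  have N1: "h \<le> N" and N2: "N \<le> h + 2 * eH" using ha by (auto simp: N_def abs_le_iff)
  have D1: "I \<le> D" and D2: "D \<le> I + 2 * e1" using hb1 by (auto simp: D_def abs_le_iff)
  have Dp: "D > 0" using D1 I by linarith
  have low: "min (h / I) 0 \<le> N / D"
  proof (cases "h \<ge> 0")
    case True
    have "0 \<le> N / D" using True N1 Dp by simp
    then show ?thesis by simp
  next
    case False
    have "h * D \<le> h * I" using False D1 by (intro mult_left_mono_neg) auto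
    then have "h / I \<le> h / D" using I Dp by (simp add: divide_simps mult.commute)
    also have "h / D \<le> N / D" using N1 Dp by (simp add: divide_right_mono)
    finally show ?thesis by simp
  qed
  have "h * (I - D) \<le> \<bar>h\<bar> * (D - I)"
  proof -
    have "h * (I - D) = (- h) * (D - I)" by (simp add: algebra_simps)
    also have "\<dots> \<le> \<bar>h\<bar> * (D - I)" using D1 by (intro mult_right_mono) auto
    finally show ?thesis .
  qed
  also have "\<dots> \<le> (nH * I) * (2 * e1)" using hb D1 D2 nH I by (intro mult_mono) auto
  also have "\<dots> \<le> (nH * D) * (2 * e1)" using D1 nH e1 by (intro mult_right_mono mult_left_mono) auto
  finally have key: "h * (I - D) \<le> 2 * D * nH * e1" by (simp add: mult_ac)
  have "N * I \<le> (h + 2 * eH) * I" using N2 I by (intro mult_right_mono) auto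
  also have "\<dots> \<le> D * (h + 2 * (eH + nH * e1))"
  proof -
    have "2 * eH * I \<le> 2 * eH * D" using D1 eH by (intro mult_left_mono) auto
    then show ?thesis using key by (simp add: algebra_simps)
  qed
  finally have "N * I \<le> D * (h + 2 * (eH + nH * e1))" .
  then have up: "N / D \<le> h / I + 2 * (eH + nH * e1) / I"
    using I Dp by (simp add: divide_simps add_divide_distrib[symmetric] mult.commute)
  show ?thesis using low up by (simp add: N_def D_def)
qed



lemma bl_cinner: "bounded_linear (cinner (u::complex^'i))"
proof -
  have "linear (cinner u)"
  proof (rule linearI)
    fix b c :: "complex^'i" and r :: real
    show "cinner u (b + c) = cinner u b + cinner u c"
      by (simp add: cinner_def sum.distrib distrib_left)
    have "cinner u (r *\<^sub>R b) = (\<Sum>i\<in>UNIV. r *\<^sub>R (cnj (u $ i) * b $ i))"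
      unfolding cinner_def by (simp add: scaleR_vec_def)
    also have "\<dots> = r *\<^sub>R cinner u b" by (simp add: cinner_def scaleR_sum_right)
    finally show "cinner u (r *\<^sub>R b) = r *\<^sub>R cinner u b" .
  qed
  then show ?thesis by (simp add: linear_conv_bounded_linear)
qed

lemma norm_phase: "norm (phase \<alpha> \<theta>) \<le> 1"
  by (cases "\<alpha> \<theta> = 0") (simp_all add: phase_def norm_divide)

lemma norm_smult_vec: "norm ((c::complex) *s (x::complex^'i)) = norm c * norm x"
  by (simp add: norm_vec_def L2_set_right_distrib norm_mult)

lemma cnj_meas[measurable (raw)]:
  "f \<in> borel_measurable M \<Longrightarrow> (\<lambda>x. cnj (f x :: complex)) \<in> borel_measurable M"
  using measurable_compose[of f M borel cnj] borel_measurable_continuous_onI[OF continuous_on_cnj[OF continuous_on_id]]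
  by simp

definition Dm :: "(real ^ 'k) set \<Rightarrow> (real ^ 'k \<Rightarrow> complex) \<Rightarrow> (real ^ 'k) measure" where
  "Dm \<Theta> \<alpha> = density lborel (\<lambda>\<theta>. ennreal (Pdens \<Theta> \<alpha> \<theta>))"

definition vst where "vst \<alpha> U \<theta> = phase \<alpha> \<theta> *s circ_state U \<theta>"

context
  fixes \<Theta> :: "(real ^ 'k) set"
    and \<alpha> :: "real ^ 'k \<Rightarrow> complex"
    and U :: "real ^ 'k \<Rightarrow> complex ^ (bool ^ 'q) ^ (bool ^ 'q)"
  assumes Theta_meas: "\<Theta> \<in> sets lborel"
    and alpha_meas: "\<alpha> \<in> borel_measurable lborel"
    and U_unitary: "\<And>\<theta>. \<theta> \<in> \<Theta> \<Longrightarrow> unitary (U \<theta>)"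
    and U_meas: "U \<in> borel_measurable lborel"
    and C_fin: "set_integrable lborel \<Theta> (\<lambda>\<theta>. norm (\<alpha> \<theta>))"
    and C_pos: "normC \<Theta> \<alpha> > 0"
begin

lemma Theta_borel[measurable]: "\<Theta> \<in> sets borel" using Theta_meas by simp

lemma alpha_borel[measurable]: "\<alpha> \<in> borel_measurable borel" using alpha_meas by simp

lemma U_borel[measurable]: "U \<in> borel_measurable borel" using U_meas by simp

lemma Pdens_eq: "Pdens \<Theta> \<alpha> \<theta> = indicator \<Theta> \<theta> * norm (\<alpha> \<theta>) / normC \<Theta> \<alpha>"
  by (simp add: Pdens_def indicator_def)

lemma Pdens_meas[measurable]: "Pdens \<Theta> \<alpha> \<in> borel_measurable borel"
  unfolding Pdens_eq[abs_def] by measurable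

lemma Pdens_nonneg: "0 \<le> Pdens \<Theta> \<alpha> \<theta>"
  using C_pos by (simp add: Pdens_def)

lemma Pdens_int: "integrable lborel (Pdens \<Theta> \<alpha>)" and Pdens_integral: "integral\<^sup>L lborel (Pdens \<Theta> \<alpha>) = 1"
proof -
  have i: "integrable lborel (\<lambda>x. indicator \<Theta> x *\<^sub>R norm (\<alpha> x))" using C_fin by (simp add: set_integrable_def)
  have eq: "Pdens \<Theta> \<alpha> = (\<lambda>x. (indicator \<Theta> x *\<^sub>R norm (\<alpha> x)) / normC \<Theta> \<alpha>)"
    by (auto simp: Pdens_eq)
  show "integrable lborel (Pdens \<Theta> \<alpha>)" unfolding eq using i by simp
  show "integral\<^sup>L lborel (Pdens \<Theta> \<alpha>) = 1" unfolding eq using C_pos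
    by (simp add: normC_def set_lebesgue_integral_def)
qed

lemma D_prob: "prob_space (Dm \<Theta> \<alpha>)"
proof
  have "emeasure (Dm \<Theta> \<alpha>) (space (Dm \<Theta> \<alpha>)) = (\<integral>\<^sup>+ x. ennreal (Pdens \<Theta> \<alpha> x) \<partial>lborel)"
    by (simp add: Dm_def emeasure_density)
  also have "\<dots> = ennreal (integral\<^sup>L lborel (Pdens \<Theta> \<alpha>))"
    by (rule nn_integral_eq_integral[OF Pdens_int]) (simp add: Pdens_nonneg)
  finally show "emeasure (Dm \<Theta> \<alpha>) (space (Dm \<Theta> \<alpha>)) = 1" by (simp add: Pdens_integral)
qed

lemma sets_D[simp, measurable_cong]: "sets (Dm \<Theta> \<alpha>) = sets borel"
  by (simp add: Dm_def)

lemma AE_D: "AE \<theta> in Dm \<Theta> \<alpha>. \<theta> \<in> \<Theta>"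
  unfolding Dm_def by (subst AE_density) (auto simp: Pdens_def split: if_splits)

lemma pair_eq: "pair_dist \<Theta> \<alpha> = Dm \<Theta> \<alpha> \<Otimes>\<^sub>M Dm \<Theta> \<alpha>"
proof -
  interpret D: prob_space "Dm \<Theta> \<alpha>" by (rule D_prob)
  have "Dm \<Theta> \<alpha> \<Otimes>\<^sub>M Dm \<Theta> \<alpha> = density (lborel \<Otimes>\<^sub>M lborel)
       (\<lambda>(x,y). ennreal (Pdens \<Theta> \<alpha> x) * ennreal (Pdens \<Theta> \<alpha> y))"
    unfolding Dm_def
    by (rule pair_measure_density) (auto simp: D.sigma_finite_measure_axioms[unfolded Dm_def] lborel.sigma_finite_measure_axioms)
  also have "\<dots> = pair_dist \<Theta> \<alpha>"
    unfolding pair_dist_def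
    by (rule density_cong) (auto simp: ennreal_mult Pdens_nonneg)
  finally show ?thesis by simp
qed

lemma pair_prob: "prob_space (pair_dist \<Theta> \<alpha>)"
proof -
  interpret D: prob_space "Dm \<Theta> \<alpha>" by (rule D_prob)
  interpret P: pair_prob_space "Dm \<Theta> \<alpha>" "Dm \<Theta> \<alpha>" by unfold_locales
  show ?thesis unfolding pair_eq by (rule P.prob_space_axioms)
qed

lemma sets_pair[simp, measurable_cong]: "sets (pair_dist \<Theta> \<alpha>) = sets (borel \<Otimes>\<^sub>M borel)"
  unfolding pair_dist_def sets_density by (rule sets_pair_measure_cong) simp_all

lemma AE_pair: "AE p in pair_dist \<Theta> \<alpha>. p \<in> \<Theta> \<times> \<Theta>"
proof -
  have m: "(\<lambda>p. ennreal (Pdens \<Theta> \<alpha> (fst p) * Pdens \<Theta> \<alpha> (snd p))) \<in> borel_measurable (lborel \<Otimes>\<^sub>M lborel)"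
    by measurable
  show ?thesis unfolding pair_dist_def
    by (subst AE_density[OF m]) (auto simp: Pdens_def split: if_splits)
qed

lemma phase_meas[measurable]: "phase \<alpha> \<in> borel_measurable borel"
  unfolding phase_def[abs_def] by measurable

lemma U_comp_meas[measurable]: "(\<lambda>\<theta>. U \<theta> $ i $ j) \<in> borel_measurable borel"
  by measurable

lemma circ_comp_meas[measurable]: "(\<lambda>\<theta>. circ_state U \<theta> $ i) \<in> borel_measurable borel"
  unfolding circ_state_def matrix_vector_mult_def by simp

lemma vst_comp_meas[measurable]: "(\<lambda>\<theta>. vst \<alpha> U \<theta> $ i) \<in> borel_measurable borel"
  unfolding vst_def by simp

lemma vst_meas[measurable]: "vst \<alpha> U \<in> borel_measurable borel"
  by (rule vec_meas_comp) simp

lemma Xpair_meas[measurable]: "Xpair \<alpha> U Op \<in> borel_measurable (borel \<Otimes>\<^sub>M borel)"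
  unfolding Xpair_def[abs_def] cinner_def matrix_vector_mult_def vec_lambda_beta by measurable

lemma norm_circ: "\<theta> \<in> \<Theta> \<Longrightarrow> norm (circ_state U \<theta>) = 1"
  by (simp add: circ_state_def unitary_norm U_unitary ket0_def)

lemma norm_vst: "\<theta> \<in> \<Theta> \<Longrightarrow> norm (vst \<alpha> U \<theta>) \<le> 1"
  by (simp add: vst_def norm_smult_vec norm_circ norm_phase)

lemma psi_eq: "psi \<Theta> \<alpha> U = integral\<^sup>L (Dm \<Theta> \<alpha>) (vst \<alpha> U)"
proof -
  have "integral\<^sup>L (Dm \<Theta> \<alpha>) (vst \<alpha> U) = (\<integral>\<theta>. Pdens \<Theta> \<alpha> \<theta> *\<^sub>R vst \<alpha> U \<theta> \<partial>lborel)"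
    unfolding Dm_def by (rule integral_density) (simp_all add: Pdens_nonneg)
  also have "\<dots> = psi \<Theta> \<alpha> U"
    unfolding psi_def set_lebesgue_integral_def
  proof (rule Bochner_Integration.integral_cong)
    fix \<theta> show "Pdens \<Theta> \<alpha> \<theta> *\<^sub>R vst \<alpha> U \<theta> = indicator \<Theta> \<theta> *\<^sub>R
      ((complex_of_real (Pdens \<Theta> \<alpha> \<theta>) * phase \<alpha> \<theta>) *s circ_state U \<theta>)"
      unfolding vst_def scaleR_vec_def
      by (cases "\<theta> \<in> \<Theta>") (auto simp: vec_eq_iff scaleR_conv_of_real Pdens_def)
  qed simp
  finally show ?thesis by simp
qed

lemma int_vst: "integrable (Dm \<Theta> \<alpha>) (vst \<alpha> U)"
proof -
  interpret D: prob_space "Dm \<Theta> \<alpha>" by (rule D_prob)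
  show ?thesis
    by (rule D.integrable_const_bound[where B=1]) (use AE_D norm_vst in \<open>auto elim: AE_mp\<close>)
qed

lemma Xpair_bound: "p \<in> \<Theta> \<times> \<Theta> \<Longrightarrow> norm (Xpair \<alpha> U Op p) \<le> spec_norm Op"
proof -
  assume p: "p \<in> \<Theta> \<times> \<Theta>"
  have "norm (Xpair \<alpha> U Op p) = norm (phase \<alpha> (fst p)) * norm (phase \<alpha> (snd p)) *
        norm (cinner (circ_state U (snd p)) (Op *v circ_state U (fst p)))"
    by (simp add: Xpair_def norm_mult)
  also have "\<dots> \<le> 1 * 1 * (norm (circ_state U (snd p)) * norm (Op *v circ_state U (fst p)))"
    by (intro mult_mono norm_phase cinner_CS) auto
  also have "\<dots> \<le> spec_norm Op * norm (circ_state U (fst p))"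
    using p spec_norm_bound[of Op "circ_state U (fst p)"] by (cases p) (simp add: norm_circ)
  also have "\<dots> = spec_norm Op" using p by (cases p) (simp add: norm_circ)
  finally show ?thesis .
qed

lemma Xpair1_bound: "p \<in> \<Theta> \<times> \<Theta> \<Longrightarrow> norm (Xpair \<alpha> U (mat 1) p) \<le> 1"
proof -
  assume p: "p \<in> \<Theta> \<times> \<Theta>"
  have "norm (Xpair \<alpha> U (mat 1) p) = norm (phase \<alpha> (fst p)) * norm (phase \<alpha> (snd p)) *
        norm (cinner (circ_state U (snd p)) (circ_state U (fst p)))"
    by (simp add: Xpair_def norm_mult)
  also have "\<dots> \<le> 1 * 1 * (norm (circ_state U (snd p)) * norm (circ_state U (fst p)))"
    by (intro mult_mono norm_phase cinner_CS) auto
  also have "\<dots> = 1" using p by (cases p) (simp add: norm_circ)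
  finally show ?thesis .
qed

lemma expval_pair:
  assumes bound: "\<And>p. p \<in> \<Theta> \<times> \<Theta> \<Longrightarrow> norm (Xpair \<alpha> U Op p) \<le> B"
  shows "integrable (pair_dist \<Theta> \<alpha>) (Xpair \<alpha> U Op)"
    and "expval \<Theta> \<alpha> U Op = integral\<^sup>L (pair_dist \<Theta> \<alpha>) (Xpair \<alpha> U Op)"
proof -
  interpret D: prob_space "Dm \<Theta> \<alpha>" by (rule D_prob)
  interpret P: pair_prob_space "Dm \<Theta> \<alpha>" "Dm \<Theta> \<alpha>" by unfold_locales
  interpret PD: prob_space "pair_dist \<Theta> \<alpha>" by (rule pair_prob)
  have mX: "Xpair \<alpha> U Op \<in> borel_measurable (pair_dist \<Theta> \<alpha>)"
    by measurable
  show iX: "integrable (pair_dist \<Theta> \<alpha>) (Xpair \<alpha> U Op)"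
    by (rule PD.integrable_const_bound[where B=B, OF _ mX]) (use AE_pair bound in \<open>auto elim: AE_mp\<close>)
  let ?v = "vst \<alpha> U"
  note iv = int_vst
  have iOv: "integrable (Dm \<Theta> \<alpha>) (\<lambda>\<theta>. Op *v ?v \<theta>)"
    by (rule integrable_bounded_linear[OF matrix_vector_mul_bounded_linear iv])
  have Opsi: "Op *v psi \<Theta> \<alpha> U = (\<integral>\<theta>. Op *v ?v \<theta> \<partial>Dm \<Theta> \<alpha>)"
    by (simp add: psi_eq integral_bounded_linear[OF matrix_vector_mul_bounded_linear iv])
  have e1: "expval \<Theta> \<alpha> U Op = (\<integral>\<theta>. cinner (psi \<Theta> \<alpha> U) (Op *v ?v \<theta>) \<partial>Dm \<Theta> \<alpha>)"
    unfolding expval_def Opsi by (simp add: integral_bounded_linear[OF bl_cinner iOv])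
  have e2: "cinner (psi \<Theta> \<alpha> U) w = (\<integral>\<theta>'. cinner (?v \<theta>') w \<partial>Dm \<Theta> \<alpha>)" for w
  proof -
    have "cinner (psi \<Theta> \<alpha> U) w = cnj (cinner w (psi \<Theta> \<alpha> U))" by (simp add: cinner_cnj)
    also have "\<dots> = cnj (\<integral>\<theta>'. cinner w (?v \<theta>') \<partial>Dm \<Theta> \<alpha>)"
      by (simp add: psi_eq integral_bounded_linear[OF bl_cinner iv])
    also have "\<dots> = (\<integral>\<theta>'. cnj (cinner w (?v \<theta>')) \<partial>Dm \<Theta> \<alpha>)"
      by (rule Bochner_Integration.integral_cnj[symmetric])
    also have "\<dots> = (\<integral>\<theta>'. cinner (?v \<theta>') w \<partial>Dm \<Theta> \<alpha>)"
      by (simp only: cinner_cnj)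
    finally show ?thesis .
  qed
  have e3: "cinner (?v \<theta>') (Op *v ?v \<theta>) = Xpair \<alpha> U Op (\<theta>, \<theta>')" for \<theta> \<theta>'
    by (simp add: vst_def cinner_scale Xpair_def mult_ac)
  have "expval \<Theta> \<alpha> U Op = (\<integral>\<theta>. (\<integral>\<theta>'. Xpair \<alpha> U Op (\<theta>, \<theta>') \<partial>Dm \<Theta> \<alpha>) \<partial>Dm \<Theta> \<alpha>)"
    unfolding e1 e2 e3 ..
  also have "\<dots> = integral\<^sup>L (Dm \<Theta> \<alpha> \<Otimes>\<^sub>M Dm \<Theta> \<alpha>) (\<lambda>(x, y). Xpair \<alpha> U Op (x, y))"
    by (rule P.integral_fst) (use iX in \<open>simp add: pair_eq\<close>)
  finally show "expval \<Theta> \<alpha> U Op = integral\<^sup>L (pair_dist \<Theta> \<alpha>) (Xpair \<alpha> U Op)"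
    by (simp add: pair_eq)
qed

lemma Re_expval_pair:
  assumes bound: "\<And>p. p \<in> \<Theta> \<times> \<Theta> \<Longrightarrow> norm (Xpair \<alpha> U Op p) \<le> B"
  shows "integrable (pair_dist \<Theta> \<alpha>) (\<lambda>p. Re (Xpair \<alpha> U Op p))"
    and "Re (expval \<Theta> \<alpha> U Op) = (\<integral>p. Re (Xpair \<alpha> U Op p) \<partial>pair_dist \<Theta> \<alpha>)"
  using integrable_bounded_linear[OF bounded_linear_Re expval_pair(1)[OF bound]]
    integral_bounded_linear[OF bounded_linear_Re expval_pair(1)[OF bound]] expval_pair(2)[OF bound]
  by auto


lemma estimator_tail:
  fixes Op :: "complex ^ (bool ^ 'q) ^ (bool ^ 'q)" and Q :: "(real ^ 'k) \<times> (real ^ 'k) \<Rightarrow> real measure"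
    and \<Omega> :: "'w measure" and E :: "'w \<Rightarrow> real"
  assumes valid: "valid_measurement \<Theta> \<alpha> U Op \<sigma> Q"
    and bound: "\<And>p. p \<in> \<Theta> \<times> \<Theta> \<Longrightarrow> norm (Xpair \<alpha> U Op p) \<le> B"
    and Mpos: "M > 0" and kap: "\<kappa> > 0"
    and Om: "prob_space \<Omega>" and Em: "E \<in> borel_measurable \<Omega>"
    and law: "distr \<Omega> borel E = estimator_dist \<Theta> \<alpha> Q M"
  shows "measure \<Omega> {\<omega> \<in> space \<Omega>. sqrt ((B^2 + \<sigma>^2) / (\<kappa> * real M)) < \<bar>E \<omega> - Re (expval \<Theta> \<alpha> U Op)\<bar>} \<le> \<kappa>"
proof -
  define \<eta> where "\<eta> = sqrt ((B^2 + \<sigma>^2) / (\<kappa> * real M))"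
  have Qm: "Q \<in> (lborel \<Otimes>\<^sub>M lborel) \<rightarrow>\<^sub>M prob_algebra borel" using valid by (simp add: valid_measurement_def)
  have QA: "integrable (Q p) (\<lambda>x. x^2) \<and> (\<integral>x. x \<partial>Q p) = Re (Xpair \<alpha> U Op p)
      \<and> (\<integral>x. (x - Re (Xpair \<alpha> U Op p))^2 \<partial>Q p) \<le> \<sigma>^2" if "p \<in> \<Theta> \<times> \<Theta>" for p
    using valid that unfolding valid_measurement_def by blast
  have sPD: "sets (pair_dist \<Theta> \<alpha>) = sets (lborel \<Otimes>\<^sub>M lborel)" unfolding pair_dist_def by (rule sets_density)
  have gm: "(\<lambda>p. Re (Xpair \<alpha> U Op p)) \<in> borel_measurable (pair_dist \<Theta> \<alpha>)" by measurable
  have gB: "\<bar>Re (Xpair \<alpha> U Op p)\<bar> \<le> B" if "p \<in> \<Theta> \<times> \<Theta>" for p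
    using abs_Re_le_cmod[of "Xpair \<alpha> U Op p"] bound[OF that] by linarith
  note SL = sample_law[OF pair_prob sPD Qm AE_pair QA gB gm Re_expval_pair(2)[OF bound]]
  note AM = avg_moment[OF SL(1) SL(2) SL(3) SL(4) SL(5) SL(6) Mpos]
  let ?P = "PiM {..<M} (\<lambda>_. pair_dist \<Theta> \<alpha> \<bind> Q)"
  let ?avg = "\<lambda>\<omega>. (\<Sum>l<M. \<omega> l) / real M"
  have nn: "0 \<le> (B^2 + \<sigma>^2) / (\<kappa> * real M)" using kap Mpos by simp
  have eta2: "\<eta>^2 = (B^2 + \<sigma>^2) / (\<kappa> * real M)" unfolding \<eta>_def using nn by simp
  have W: "(\<sigma>^2 + B^2) / real M \<le> \<kappa> * \<eta>^2" unfolding eta2 using kap Mpos by (simp add: field_simps)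
  have tb: "measure ?P {\<omega> \<in> space ?P. \<eta> < \<bar>?avg \<omega> - Re (expval \<Theta> \<alpha> U Op)\<bar>} \<le> \<kappa>"
    by (rule tail_bound[OF AM(1) AM(2) AM(3)]) (use AM(4) W kap in \<open>simp_all add: \<eta>_def\<close>)
  have Sset: "{y::real. \<eta> < \<bar>y - Re (expval \<Theta> \<alpha> U Op)\<bar>} \<in> sets borel" by measurable
  have "measure \<Omega> {\<omega> \<in> space \<Omega>. \<eta> < \<bar>E \<omega> - Re (expval \<Theta> \<alpha> U Op)\<bar>} = measure \<Omega> (E -` {y. \<eta> < \<bar>y - Re (expval \<Theta> \<alpha> U Op)\<bar>} \<inter> space \<Omega>)"
    by (rule arg_cong[where f="measure \<Omega>"]) auto
  also have "\<dots> = measure (distr \<Omega> borel E) {y. \<eta> < \<bar>y - Re (expval \<Theta> \<alpha> U Op)\<bar>}"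
    by (rule measure_distr[symmetric, OF Em Sset])
  also have "\<dots> = measure (distr ?P borel ?avg) {y. \<eta> < \<bar>y - Re (expval \<Theta> \<alpha> U Op)\<bar>}"
    unfolding law estimator_dist_def ..
  also have "\<dots> = measure ?P (?avg -` {y. \<eta> < \<bar>y - Re (expval \<Theta> \<alpha> U Op)\<bar>} \<inter> space ?P)"
    by (rule measure_distr[OF AM(2) Sset])
  also have "\<dots> = measure ?P {\<omega> \<in> space ?P. \<eta> < \<bar>?avg \<omega> - Re (expval \<Theta> \<alpha> U Op)\<bar>}"
    by (rule arg_cong[where f="measure ?P"]) auto
  finally show ?thesis using tb by (simp add: \<eta>_def)
qed

end

theorem theorem2:
  fixes \<Theta> :: "(real ^ 'k) set"
    and \<alpha> :: "real ^ 'k \<Rightarrow> complex"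
    and U :: "real ^ 'k \<Rightarrow> complex ^ (bool ^ 'q) ^ (bool ^ 'q)"
    and H :: "complex ^ (bool ^ 'q) ^ (bool ^ 'q)"
    and \<sigma>H \<sigma>1 \<kappa> :: real
    and M :: nat
    and QH Q1 :: "(real ^ 'k) \<times> (real ^ 'k) \<Rightarrow> real measure"
    and \<Omega> :: "'w measure"
    and EH E1 :: "'w \<Rightarrow> real"
  assumes Theta_meas: "\<Theta> \<in> sets lborel"
    and alpha_meas: "\<alpha> \<in> borel_measurable lborel"
    and U_unitary: "\<And>\<theta>. \<theta> \<in> \<Theta> \<Longrightarrow> unitary (U \<theta>)"
    and U_meas: "U \<in> borel_measurable lborel"
    and C_fin: "set_integrable lborel \<Theta> (\<lambda>\<theta>. norm (\<alpha> \<theta>))"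
    and C_pos: "normC \<Theta> \<alpha> > 0"
    and H_herm: "hermitian H"
    and norm1_pos: "Re (expval \<Theta> \<alpha> U (mat 1)) > 0"
    and M_pos: "M > 0"
    and kappa_pos: "\<kappa> > 0"
    and QH_valid: "valid_measurement \<Theta> \<alpha> U H \<sigma>H QH"
    and Q1_valid: "valid_measurement \<Theta> \<alpha> U (mat 1) \<sigma>1 Q1"
    and Omega: "prob_space \<Omega>"
    and EH_rv: "EH \<in> borel_measurable \<Omega>"
    and E1_rv: "E1 \<in> borel_measurable \<Omega>"
    and EH_law: "distr \<Omega> borel EH = estimator_dist \<Theta> \<alpha> QH M"
    and E1_law: "distr \<Omega> borel E1 = estimator_dist \<Theta> \<alpha> Q1 M"
  shows
    "let nH = spec_norm H;
         \<eta>H = sqrt ((nH ^ 2 + \<sigma>H ^ 2) / (\<kappa> * real M));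
         \<eta>1 = sqrt ((1 + \<sigma>1 ^ 2) / (\<kappa> * real M));
         I = Re (expval \<Theta> \<alpha> U (mat 1));
         Ht = Re (expval \<Theta> \<alpha> U H / expval \<Theta> \<alpha> U (mat 1));
         L = (\<lambda>\<omega>. (EH \<omega> + \<eta>H) / (E1 \<omega> + \<eta>1))
     in measure \<Omega> {\<omega> \<in> space \<Omega>. min Ht 0 \<le> L \<omega> \<and> L \<omega> \<le> Ht + 2 * (\<eta>H + nH * \<eta>1) / I}
          \<ge> 1 - 2 * \<kappa>"
proof -
  note est = estimator_tail[OF Theta_meas alpha_meas U_unitary U_meas C_fin C_pos]
  let ?psi = "psi \<Theta> \<alpha> U"
  define eH where "eH = expval \<Theta> \<alpha> U H"
  define e1 where "e1 = expval \<Theta> \<alpha> U (mat 1)"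
  define nH where "nH = spec_norm H"
  define \<eta>H where "\<eta>H = sqrt ((nH ^ 2 + \<sigma>H ^ 2) / (\<kappa> * real M))"
  define \<eta>1 where "\<eta>1 = sqrt ((1 + \<sigma>1 ^ 2) / (\<kappa> * real M))"
  have e1_eq: "e1 = complex_of_real ((norm ?psi)^2)"
    unfolding e1_def expval_def by (simp add: cinner_self)
  have I_eq: "Re e1 = (norm ?psi)^2" using e1_eq by simp
  have Ipos: "Re e1 > 0" using norm1_pos by (simp add: e1_def)
  have eH_cnj: "cnj eH = eH" unfolding eH_def expval_def by (rule herm_real[OF H_herm])
  have eH_real: "eH = complex_of_real (Re eH)"
  proof -
    have "Im (cnj eH) = Im eH" using eH_cnj by simp
    then have "Im eH = 0" by simp
    then show ?thesis by (simp add: complex_eq_iff)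
  qed
  have Ht_eq: "Re (eH / e1) = Re eH / Re e1"
    by (subst e1_eq) (simp add: Re_divide_of_real I_eq)
  have nH_nn: "0 \<le> nH" unfolding nH_def by (rule spec_norm_nonneg)
  have hb: "\<bar>Re eH\<bar> \<le> nH * Re e1"
  proof -
    have "\<bar>Re eH\<bar> \<le> norm eH" by (rule abs_Re_le_cmod)
    also have "\<dots> \<le> norm ?psi * norm (H *v ?psi)" unfolding eH_def expval_def by (rule cinner_CS)
    also have "\<dots> \<le> norm ?psi * (nH * norm ?psi)"
      unfolding nH_def by (intro mult_left_mono spec_norm_bound) simp
    also have "\<dots> = nH * Re e1" by (simp add: I_eq power2_eq_square)
    finally show ?thesis .
  qed
  have XB: "norm (Xpair \<alpha> U H p) \<le> spec_norm H" if "p \<in> \<Theta> \<times> \<Theta>" for p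
    by (rule Xpair_bound[OF Theta_meas alpha_meas _ U_meas C_fin C_pos]) (simp_all add: U_unitary that)
  have XB1: "norm (Xpair \<alpha> U (mat 1) p) \<le> 1" if "p \<in> \<Theta> \<times> \<Theta>" for p
    by (rule Xpair1_bound[OF Theta_meas alpha_meas _ U_meas C_fin C_pos]) (simp_all add: U_unitary that)
  have tH: "measure \<Omega> {\<omega> \<in> space \<Omega>. \<eta>H < \<bar>EH \<omega> - Re eH\<bar>} \<le> \<kappa>"
  proof -
    have "measure \<Omega> {\<omega> \<in> space \<Omega>. sqrt ((spec_norm H^2 + \<sigma>H^2) / (\<kappa> * real M)) < \<bar>EH \<omega> - Re (expval \<Theta> \<alpha> U H)\<bar>} \<le> \<kappa>"
      by (rule estimator_tail[OF Theta_meas alpha_meas _ U_meas C_fin C_pos QH_valid _ M_pos kappa_pos Omega EH_rv EH_law])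
         (simp_all add: U_unitary XB)
    then show ?thesis by (simp add: \<eta>H_def eH_def nH_def)
  qed
  have t1: "measure \<Omega> {\<omega> \<in> space \<Omega>. \<eta>1 < \<bar>E1 \<omega> - Re e1\<bar>} \<le> \<kappa>"
  proof -
    have "measure \<Omega> {\<omega> \<in> space \<Omega>. sqrt ((1^2 + \<sigma>1^2) / (\<kappa> * real M)) < \<bar>E1 \<omega> - Re (expval \<Theta> \<alpha> U (mat 1))\<bar>} \<le> \<kappa>"
      by (rule estimator_tail[OF Theta_meas alpha_meas _ U_meas C_fin C_pos Q1_valid _ M_pos kappa_pos Omega E1_rv E1_law])
         (simp_all add: U_unitary XB1)
    then show ?thesis by (simp add: \<eta>1_def e1_def)
  qed
  interpret O: prob_space \<Omega> by (rule Omega)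
  define bH where "bH = {\<omega> \<in> space \<Omega>. \<eta>H < \<bar>EH \<omega> - Re eH\<bar>}"
  define b1 where "b1 = {\<omega> \<in> space \<Omega>. \<eta>1 < \<bar>E1 \<omega> - Re e1\<bar>}"
  define G where "G = {\<omega> \<in> space \<Omega>. min (Re (eH / e1)) 0 \<le> (EH \<omega> + \<eta>H) / (E1 \<omega> + \<eta>1) \<and>
      (EH \<omega> + \<eta>H) / (E1 \<omega> + \<eta>1) \<le> Re (eH / e1) + 2 * (\<eta>H + nH * \<eta>1) / Re e1}"
  have mH[measurable]: "EH \<in> borel_measurable \<Omega>" by (rule EH_rv)
  have m1[measurable]: "E1 \<in> borel_measurable \<Omega>" by (rule E1_rv)
  have sbH: "bH \<in> sets \<Omega>" unfolding bH_def by measurable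
  have sb1: "b1 \<in> sets \<Omega>" unfolding b1_def by measurable
  have sG: "G \<in> sets \<Omega>" unfolding G_def by measurable
  have eHnn: "0 \<le> \<eta>H" unfolding \<eta>H_def using kappa_pos M_pos by simp
  have e1nn: "0 \<le> \<eta>1" unfolding \<eta>1_def using kappa_pos M_pos by simp
  have sub: "space \<Omega> - (bH \<union> b1) \<subseteq> G"
  proof
    fix \<omega> assume w: "\<omega> \<in> space \<Omega> - (bH \<union> b1)"
    then have a: "\<bar>EH \<omega> - Re eH\<bar> \<le> \<eta>H" and b: "\<bar>E1 \<omega> - Re e1\<bar> \<le> \<eta>1"
      by (auto simp: bH_def b1_def)
    show "\<omega> \<in> G" using alg[OF Ipos hb nH_nn eHnn e1nn a b] w unfolding G_def Ht_eq by simp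
  qed
  have "1 - 2 * \<kappa> \<le> 1 - (measure \<Omega> bH + measure \<Omega> b1)"
    using tH t1 by (simp add: bH_def b1_def)
  also have "\<dots> \<le> 1 - measure \<Omega> (bH \<union> b1)"
    using measure_subadditive[OF sbH sb1] by (simp add: O.emeasure_eq_measure)
  also have "\<dots> = measure \<Omega> (space \<Omega> - (bH \<union> b1))"
    using O.prob_compl[of "bH \<union> b1"] sbH sb1 by simp
  also have "\<dots> \<le> measure \<Omega> G" by (rule O.finite_measure_mono[OF sub sG])
  finally have "1 - 2 * \<kappa> \<le> measure \<Omega> G" .
  then show ?thesis unfolding Let_def G_def eH_def e1_def nH_def \<eta>H_def \<eta>1_def by simp
qed

end
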